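(* Let $X$ be a Banach lattice and let $M$ and $N$ be nonzero Banach sublattices of $X$ such that $X=M\oplus_\infty N$ and the canonical projections from $X$ onto $M$ and onto $N$ are positive operators. Let $Y$ be a strictly monotone Banach lattice. If the pair $(X,Y)$ has the Bishop-Phelps-Bollobás property for positive operators, then $Y$ is uniformly monotone.
   Context: All spaces are real. $X=M\oplus_\infty N$ means every $x\in X$ decomposes uniquely as $x=m+n$ with $m\in M$, $n\in N$, and $\Vert x\Vert=\max\{\Vert m\Vert,\Vert n\Vert\}$. An operator is positive if it maps positive elements to positive elements. A Banach lattice $Y$ is strictly monotone if $x,y\ge0$ and $y\ne0$ imply $\Vert x+y\Vert>\Vert x\Vert$. A Banach lattice $E$ is uniformly monotone if for every $\varepsilon>0$ there is $\delta(\varepsilon)>0$ such that whenever $x\in E$ with $\Vert x\Vert=1$, $y\in E$, $x,y\ge0$, and $\Vert x+y\Vert\le 1+\delta(\varepsilon)$, then $\Vert y\Vert\le\varepsilon$. For a Banach space $X$, $S_X$ is its unit sphere and $L(X,Y)$ the space of bounded operators with operator norm. A pair $(X,Y)$ of Banach lattices has the Bishop-Phelps-Bollobás property for positive operators if for every $0<\varepsilon<1$ there exists $0<\eta(\varepsilon)<\varepsilon$ such that for every positive $S\in S_{L(X,Y)}$ and every $x_0\in S_X$ with $\Vert S(x_0)\Vert>1-\eta(\varepsilon)$, there exist $u_0\in S_X$ and a positive operator $T\in S_{L(X,Y)}$ with $\Vert T(u_0)\Vert=1$, $\Vert u_0-x_0\Vert<\varepsilon$ and $\Vert T-S\Vert<\varepsilon$.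 *)

theory Defs
  imports "HOL-Analysis.Analysis"
begin

text \<open>Real Banach lattices are modelled as types of class
  banach + ordered_real_vector + lattice (a Banach space carrying a compatible
  vector lattice order) satisfying the lattice-norm axiom below.\<close>

definition lat_abs :: "'a::{ordered_real_vector, lattice} \<Rightarrow> 'a" where
  "lat_abs x = sup x (- x)"

definition banach_lattice :: "'a::{banach, ordered_real_vector, lattice} itself \<Rightarrow> bool" where
  "banach_lattice _ \<longleftrightarrow> (\<forall>x y::'a. lat_abs x \<le> lat_abs y \<longrightarrow> norm x \<le> norm y)"

definition banach_sublattice :: "'a::{banach, ordered_real_vector, lattice} set \<Rightarrow> bool" where
  "banach_sublattice M \<longleftrightarrow> subspace M \<and> closed M \<and>
     (\<forall>x\<in>M. \<forall>y\<in>M. sup x y \<in> M \<and> inf x y \<in> M)"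

definition linf_direct_sum :: "'a::real_normed_vector set \<Rightarrow> 'a set \<Rightarrow> bool" where
  "linf_direct_sum M N \<longleftrightarrow>
     (\<forall>x. \<exists>!p. fst p \<in> M \<and> snd p \<in> N \<and> x = fst p + snd p) \<and>
     (\<forall>m\<in>M. \<forall>n\<in>N. norm (m + n) = max (norm m) (norm n))"

text \<open>The canonical projections onto M and N (along the decomposition) are positive.\<close>
definition positive_projections :: "'a::{real_normed_vector, ordered_ab_group_add} set \<Rightarrow> 'a set \<Rightarrow> bool" where
  "positive_projections M N \<longleftrightarrow>
     (\<forall>x m n. x = m + n \<and> m \<in> M \<and> n \<in> N \<and> 0 \<le> x \<longrightarrow> 0 \<le> m \<and> 0 \<le> n)"

definition positive_op :: "('a::{real_normed_vector, order, zero} \<Rightarrow>\<^sub>L 'b::{real_normed_vector, order}) \<Rightarrow> bool" where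
  "positive_op T \<longleftrightarrow> (\<forall>x. 0 \<le> x \<longrightarrow> 0 \<le> blinfun_apply T x)"

definition strictly_monotone :: "'a::{real_normed_vector, order} itself \<Rightarrow> bool" where
  "strictly_monotone _ \<longleftrightarrow> (\<forall>x y::'a. 0 \<le> x \<and> 0 \<le> y \<and> y \<noteq> 0 \<longrightarrow> norm (x + y) > norm x)"

definition uniformly_monotone :: "'a::{real_normed_vector, order} itself \<Rightarrow> bool" where
  "uniformly_monotone _ \<longleftrightarrow> (\<forall>\<epsilon>>0. \<exists>\<delta>>0. \<forall>x y::'a.
      norm x = 1 \<and> 0 \<le> x \<and> 0 \<le> y \<and> norm (x + y) \<le> 1 + \<delta> \<longrightarrow> norm y \<le> \<epsilon>)"

definition BPBp_pos :: "'a::{real_normed_vector, order} itself \<Rightarrow> 'b::{real_normed_vector, order} itself \<Rightarrow> bool" where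
  "BPBp_pos _ _ \<longleftrightarrow> (\<forall>\<epsilon>::real. 0 < \<epsilon> \<and> \<epsilon> < 1 \<longrightarrow> (\<exists>\<eta>. 0 < \<eta> \<and> \<eta> < \<epsilon> \<and>
      (\<forall>(S::'a \<Rightarrow>\<^sub>L 'b) x0. positive_op S \<and> norm S = 1 \<and> norm x0 = 1 \<and>
          norm (blinfun_apply S x0) > 1 - \<eta> \<longrightarrow>
        (\<exists>u0 (T::'a \<Rightarrow>\<^sub>L 'b). norm u0 = 1 \<and> positive_op T \<and> norm T = 1 \<and>
           norm (blinfun_apply T u0) = 1 \<and> norm (u0 - x0) < \<epsilon> \<and> norm (T - S) < \<epsilon>))))"

end

theory Submission
  imports Defs
begin


definition lgraph :: "('a::real_vector \<Rightarrow> real) \<Rightarrow> ('a \<times> real) set \<Rightarrow> bool" where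
  "lgraph p G \<longleftrightarrow> (0,0) \<in> G \<and>
     (\<forall>x a y b. (x,a) \<in> G \<longrightarrow> (y,b) \<in> G \<longrightarrow> (x+y, a+b) \<in> G) \<and>
     (\<forall>x a c. (x,a) \<in> G \<longrightarrow> (c *\<^sub>R x, c*a) \<in> G) \<and>
     (\<forall>x a b. (x,a) \<in> G \<longrightarrow> (x,b) \<in> G \<longrightarrow> a = b) \<and>
     (\<forall>x a. (x,a) \<in> G \<longrightarrow> a \<le> p x)"

lemma lgraph_extend:
  fixes p :: "'a::real_vector \<Rightarrow> real"
  assumes sub: "\<And>x y. p (x+y) \<le> p x + p y"
    and hom: "\<And>c x. c \<ge> 0 \<Longrightarrow> p (c *\<^sub>R x) = c * p x"
    and G: "lgraph p G" and z: "\<forall>a. (z,a) \<notin> G"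
  shows "\<exists>G'. lgraph p G' \<and> G \<subseteq> G' \<and> G' \<noteq> G"
proof -
  have G0: "(0,0) \<in> G"
    and Gadd: "\<And>x a y b. (x,a) \<in> G \<Longrightarrow> (y,b) \<in> G \<Longrightarrow> (x+y, a+b) \<in> G"
    and Gsc: "\<And>x a c. (x,a) \<in> G \<Longrightarrow> (c *\<^sub>R x, c*a) \<in> G"
    and Gfun: "\<And>x a b. (x,a) \<in> G \<Longrightarrow> (x,b) \<in> G \<Longrightarrow> a = b"
    and Gdom: "\<And>x a. (x,a) \<in> G \<Longrightarrow> a \<le> p x"
    using G unfolding lgraph_def by blast+
  define L where "L = {b - p (y - z) | y b. (y,b) \<in> G}"
  define c where "c = Sup L"
  have key: "b - p (y - z) \<le> p (x + z) - a" if "(x,a) \<in> G" "(y,b) \<in> G" for x a y b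
  proof -
    have "a + b \<le> p (x + y)" using Gdom[OF Gadd[OF that]] .
    also have "p (x + y) \<le> p (x + z) + p (y - z)" using sub[of "x+z" "y-z"] by simp
    finally show ?thesis by simp
  qed
  have Lne: "L \<noteq> {}" using G0 unfolding L_def by blast
  have Lbdd: "bdd_above L" unfolding L_def bdd_above_def
    using key[OF G0] by auto
  have c_up: "b - p (y - z) \<le> c" if "(y,b) \<in> G" for y b
    unfolding c_def by (rule cSup_upper[OF _ Lbdd]) (use that L_def in blast)
  have c_low: "c \<le> p (x + z) - a" if "(x,a) \<in> G" for x a
    unfolding c_def by (rule cSup_least[OF Lne]) (use key[OF that] L_def in blast)
  define G' where "G' = {(x + t *\<^sub>R z, a + t * c) | x a t. (x,a) \<in> G}"
  have dom': "a + t * c \<le> p (x + t *\<^sub>R z)" if "(x,a) \<in> G" for x a t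
  proof (cases "t > 0")
    case True
    have "(inverse t *\<^sub>R x, inverse t * a) \<in> G" by (rule Gsc[OF that])
    from c_low[OF this] have "t * c \<le> t * (p (inverse t *\<^sub>R x + z) - inverse t * a)"
      using True by (simp add: mult_left_mono)
    also have "\<dots> = t * p (inverse t *\<^sub>R x + z) - a" using True by (simp add: algebra_simps)
    also have "t * p (inverse t *\<^sub>R x + z) = p (t *\<^sub>R (inverse t *\<^sub>R x + z))"
      using hom[of t] True by simp
    also have "t *\<^sub>R (inverse t *\<^sub>R x + z) = x + t *\<^sub>R z" using True by (simp add: algebra_simps)
    finally show ?thesis by simp
  next
    case False
    show ?thesis
    proof (cases "t = 0")
      case True then show ?thesis using Gdom[OF that] by simp
    next
      case False
      define s where "s = - t"
      have s: "s > 0" using False \<open>\<not> t > 0\<close> s_def by simp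
      have "(inverse s *\<^sub>R x, inverse s * a) \<in> G" by (rule Gsc[OF that])
      from c_up[OF this] have "s * (inverse s * a - p (inverse s *\<^sub>R x - z)) \<le> s * c"
        using s by (simp add: mult_left_mono)
      then have "a - s * p (inverse s *\<^sub>R x - z) \<le> s * c" using s by (simp add: algebra_simps)
      moreover have "s * p (inverse s *\<^sub>R x - z) = p (s *\<^sub>R (inverse s *\<^sub>R x - z))"
        using hom[of s] s by simp
      moreover have "s *\<^sub>R (inverse s *\<^sub>R x - z) = x + t *\<^sub>R z" using s s_def by (simp add: algebra_simps)
      ultimately show ?thesis using s_def by simp
    qed
  qed
  have fun': "a + t * c = b + t' * c" if "(x,a) \<in> G" "(y,b) \<in> G" "x + t *\<^sub>R z = y + t' *\<^sub>R z" for x a y b t t'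
  proof (cases "t = t'")
    case True
    then have "x = y" using that(3) by simp
    then show ?thesis using Gfun that True by blast
  next
    case False
    have "(x + (-1) *\<^sub>R y, a + (-1) * b) \<in> G" using Gadd[OF that(1) Gsc[OF that(2)]] .
    then have "(inverse (t' - t) *\<^sub>R (x + (-1) *\<^sub>R y), inverse (t' - t) * (a + (-1) * b)) \<in> G"
      by (rule Gsc)
    moreover have "inverse (t' - t) *\<^sub>R (x + (-1) *\<^sub>R y) = z"
    proof -
      have "x - y = (t' - t) *\<^sub>R z" using that(3) by (simp add: algebra_simps)
      then show ?thesis using False by simp
    qed
    ultimately show ?thesis using z by auto
  qed
  have "lgraph p G'"
    unfolding lgraph_def
  proof (intro conjI allI impI)
    show "(0,0) \<in> G'" unfolding G'_def using G0 by force
  next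
    fix x a y b assume "(x,a) \<in> G'" "(y,b) \<in> G'"
    then obtain x1 a1 t1 x2 a2 t2 where "(x1,a1) \<in> G" "(x2,a2) \<in> G"
      "x = x1 + t1 *\<^sub>R z" "a = a1 + t1 * c" "y = x2 + t2 *\<^sub>R z" "b = a2 + t2 * c"
      unfolding G'_def by blast
    then show "(x+y, a+b) \<in> G'" unfolding G'_def
      by (intro CollectI exI[of _ "x1+x2"] exI[of _ "a1+a2"] exI[of _ "t1+t2"])
         (auto simp: algebra_simps Gadd)
  next
    fix x a r assume "(x,a) \<in> G'"
    then obtain x1 a1 t1 where "(x1,a1) \<in> G" "x = x1 + t1 *\<^sub>R z" "a = a1 + t1 * c"
      unfolding G'_def by blast
    moreover have "(r *\<^sub>R x1, r*a1) \<in> G" using Gsc \<open>(x1,a1) \<in> G\<close> by blast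
    ultimately show "(r *\<^sub>R x, r*a) \<in> G'" unfolding G'_def
      by (intro CollectI exI[of _ "r *\<^sub>R x1"] exI[of _ "r*a1"] exI[of _ "r*t1"])
         (simp add: algebra_simps scaleR_add_right)
  next
    fix x a b assume "(x,a) \<in> G'" "(x,b) \<in> G'"
    then obtain x1 a1 t1 x2 a2 t2 where "(x1,a1) \<in> G" "(x2,a2) \<in> G"
      "x = x1 + t1 *\<^sub>R z" "a = a1 + t1 * c" "x = x2 + t2 *\<^sub>R z" "b = a2 + t2 * c"
      unfolding G'_def by blast
    then show "a = b" using fun' by metis
  next
    fix x a assume "(x,a) \<in> G'"
    then obtain x1 a1 t1 where "(x1,a1) \<in> G" "x = x1 + t1 *\<^sub>R z" "a = a1 + t1 * c"
      unfolding G'_def by blast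
    then show "a \<le> p x" using dom' by simp
  qed
  moreover have "G \<subseteq> G'"
  proof
    fix q assume "q \<in> G"
    then obtain x a where "q = (x,a)" "(x,a) \<in> G" by (cases q) auto
    then show "q \<in> G'" unfolding G'_def
      by (intro CollectI exI[of _ x] exI[of _ a] exI[of _ "0::real"]) auto
  qed
  moreover have "(z, c) \<in> G'" unfolding G'_def
    using G0 by (intro CollectI exI[of _ 0] exI[of _ "0::real"] exI[of _ "1::real"]) auto
  ultimately show ?thesis using z by blast
qed


lemma lgraph_chain:
  assumes C: "C \<in> chains {G. lgraph p G \<and> G0 \<subseteq> G}" and ne: "C \<noteq> {}"
  shows "lgraph p (\<Union>C) \<and> G0 \<subseteq> \<Union>C"
proof -
  have sub: "\<And>G. G \<in> C \<Longrightarrow> lgraph p G \<and> G0 \<subseteq> G" using C unfolding chains_def by blast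
  have ch: "\<And>G H. G \<in> C \<Longrightarrow> H \<in> C \<Longrightarrow> G \<subseteq> H \<or> H \<subseteq> G"
    using C unfolding chains_def chain_subset_def by blast
  obtain G1 where G1: "G1 \<in> C" using ne by blast
  have two: "\<exists>G\<in>C. q1 \<in> G \<and> q2 \<in> G" if q: "q1 \<in> \<Union>C" "q2 \<in> \<Union>C" for q1 q2
  proof -
    obtain G H where "G \<in> C" "H \<in> C" "q1 \<in> G" "q2 \<in> H" using q by blast
    then show ?thesis using ch[of G H] by blast
  qed
  have "lgraph p (\<Union>C)"
    unfolding lgraph_def
  proof (intro conjI allI impI)
    show "(0,0) \<in> \<Union>C" using G1 sub unfolding lgraph_def by blast
  next
    fix x a y b assume "(x,a) \<in> \<Union>C" "(y,b) \<in> \<Union>C"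
    then obtain G where "G \<in> C" "(x,a) \<in> G" "(y,b) \<in> G" using two by blast
    then show "(x+y,a+b) \<in> \<Union>C" using sub unfolding lgraph_def by blast
  next
    fix x a r assume "(x,a) \<in> \<Union>C"
    then obtain G where "G \<in> C" "(x,a) \<in> G" by blast
    then show "(r *\<^sub>R x, r*a) \<in> \<Union>C" using sub unfolding lgraph_def by blast
  next
    fix x a b assume "(x,a) \<in> \<Union>C" "(x,b) \<in> \<Union>C"
    then obtain G where "G \<in> C" "(x,a) \<in> G" "(x,b) \<in> G" using two by blast
    then show "a = b" using sub unfolding lgraph_def by blast
  next
    fix x a assume "(x,a) \<in> \<Union>C"
    then obtain G where "G \<in> C" "(x,a) \<in> G" by blast
    then show "a \<le> p x" using sub unfolding lgraph_def by blast
  qed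
  then show ?thesis using G1 sub by blast
qed

lemma hahn_banach_sublinear:
  fixes p :: "'a::real_vector \<Rightarrow> real"
  assumes sub: "\<And>x y. p (x+y) \<le> p x + p y"
    and hom: "\<And>c x. c \<ge> 0 \<Longrightarrow> p (c *\<^sub>R x) = c * p x"
  shows "\<exists>F. (\<forall>x y. F (x + y) = F x + F y) \<and> (\<forall>c x. F (c *\<^sub>R x) = c * F x) \<and>
             (\<forall>x. F x \<le> p x) \<and> F x0 = p x0"
proof -
  have p0: "p 0 = 0" using hom[of 0 0] by simp
  define G0 where "G0 = {(t *\<^sub>R x0, t * p x0) | t. True}"
  have "lgraph p G0"
    unfolding lgraph_def
  proof (intro conjI allI impI)
    show "(0,0) \<in> G0" unfolding G0_def by (intro CollectI exI[of _ 0]) simp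
  next
    fix x a y b assume "(x,a) \<in> G0" "(y,b) \<in> G0"
    then obtain t s where "x = t *\<^sub>R x0" "a = t * p x0" "y = s *\<^sub>R x0" "b = s * p x0"
      unfolding G0_def by blast
    then show "(x+y,a+b) \<in> G0" unfolding G0_def
      by (intro CollectI exI[of _ "t+s"]) (simp add: algebra_simps)
  next
    fix x a r assume "(x,a) \<in> G0"
    then obtain t where "x = t *\<^sub>R x0" "a = t * p x0" unfolding G0_def by blast
    then show "(r *\<^sub>R x, r*a) \<in> G0" unfolding G0_def
      by (intro CollectI exI[of _ "r*t"]) (simp add: algebra_simps)
  next
    fix x a b assume "(x,a) \<in> G0" "(x,b) \<in> G0"
    then obtain t s where "x = t *\<^sub>R x0" "a = t * p x0" "x = s *\<^sub>R x0" "b = s * p x0"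
      unfolding G0_def by blast
    then show "a = b"
      by (cases "x0 = 0") (auto simp: p0 scaleR_cancel_right)
  next
    fix x a assume "(x,a) \<in> G0"
    then obtain t where t: "x = t *\<^sub>R x0" "a = t * p x0" unfolding G0_def by blast
    show "a \<le> p x"
    proof (cases "t \<ge> 0")
      case True then show ?thesis using t hom by simp
    next
      case False
      have "0 \<le> p x0 + p (- x0)" using sub[of x0 "-x0"] p0 by simp
      then have "(-t) * (- p x0) \<le> (- t) * p (- x0)" using False
        by (intro mult_left_mono) auto
      then have "t * p x0 \<le> (- t) * p (- x0)" by simp
      also have "\<dots> = p ((-t) *\<^sub>R (-x0))" using hom[of "-t" "-x0"] False by simp
      finally show ?thesis using t by simp
    qed
  qed
  define A where "A = {G. lgraph p G \<and> G0 \<subseteq> G}"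
  have "\<forall>C\<in>chains A. \<exists>U\<in>A. \<forall>X\<in>C. X \<subseteq> U"
  proof
    fix C assume C: "C \<in> chains A"
    show "\<exists>U\<in>A. \<forall>X\<in>C. X \<subseteq> U"
    proof (cases "C = {}")
      case True then show ?thesis using \<open>lgraph p G0\<close> unfolding A_def by blast
    next
      case False
      then have "\<Union>C \<in> A" using lgraph_chain[OF C[unfolded A_def] False] unfolding A_def by blast
      then show ?thesis by blast
    qed
  qed
  from Zorn_Lemma2[OF this] obtain Gm where Gm: "Gm \<in> A" and max: "\<forall>X\<in>A. Gm \<subseteq> X \<longrightarrow> X = Gm"
    by blast
  have lg: "lgraph p Gm" and G0m: "G0 \<subseteq> Gm" using Gm unfolding A_def by auto
  have tot: "\<exists>a. (x,a) \<in> Gm" for x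
  proof (rule ccontr)
    assume "\<nexists>a. (x,a) \<in> Gm"
    then obtain G' where "lgraph p G'" "Gm \<subseteq> G'" "G' \<noteq> Gm"
      using lgraph_extend[OF sub hom lg] by blast
    moreover then have "G' \<in> A" using G0m unfolding A_def by blast
    ultimately show False using max by blast
  qed
  have Gadd: "\<And>x a y b. (x,a) \<in> Gm \<Longrightarrow> (y,b) \<in> Gm \<Longrightarrow> (x+y, a+b) \<in> Gm"
    and Gsc: "\<And>x a c. (x,a) \<in> Gm \<Longrightarrow> (c *\<^sub>R x, c*a) \<in> Gm"
    and Gfun: "\<And>x a b. (x,a) \<in> Gm \<Longrightarrow> (x,b) \<in> Gm \<Longrightarrow> a = b"
    and Gdom: "\<And>x a. (x,a) \<in> Gm \<Longrightarrow> a \<le> p x"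
    using lg unfolding lgraph_def by blast+
  define F where "F x = (THE a. (x,a) \<in> Gm)" for x
  have FG: "(x, F x) \<in> Gm" for x
    unfolding F_def using tot[of x] Gfun by (metis theI)
  have Funiq: "(x,a) \<in> Gm \<Longrightarrow> F x = a" for x a using FG Gfun by blast
  show ?thesis
  proof (intro exI[of _ F] conjI allI)
    fix x y show "F (x + y) = F x + F y" using Funiq[OF Gadd[OF FG FG]] .
  next
    fix c x show "F (c *\<^sub>R x) = c * F x" using Funiq[OF Gsc[OF FG]] .
  next
    fix x show "F x \<le> p x" using Gdom[OF FG] .
  next
    have "(x0, p x0) \<in> G0" unfolding G0_def by (intro CollectI exI[of _ 1]) simp
    then show "F x0 = p x0" using Funiq G0m by blast
  qed
qed



lemma la_ge: fixes x :: "'a::{ordered_real_vector, lattice}"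
  shows "x \<le> lat_abs x" "- x \<le> lat_abs x"
  unfolding lat_abs_def by simp_all

lemma la_nonneg: fixes x :: "'a::{ordered_real_vector, lattice}"
  shows "0 \<le> lat_abs x"
proof -
  have "x + (- x) \<le> lat_abs x + lat_abs x" using la_ge[of x] by (rule add_mono)
  then have "0 \<le> (1/2::real) *\<^sub>R (lat_abs x + lat_abs x)" by (intro scaleR_nonneg_nonneg) auto
  also have "(1/2::real) *\<^sub>R (lat_abs x + lat_abs x) = lat_abs x"
    by (metis scaleR_half_double)
  finally show ?thesis .
qed

lemma la_pos: fixes x :: "'a::{ordered_real_vector, lattice}"
  assumes "0 \<le> x" shows "lat_abs x = x"
proof -
  have "- x \<le> x" using assms by (meson dual_order.trans neg_le_0_iff_le)
  then show ?thesis unfolding lat_abs_def by (simp add: sup_absorb1)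
qed

lemma la_la: fixes x :: "'a::{ordered_real_vector, lattice}"
  shows "lat_abs (lat_abs x) = lat_abs x"
  using la_pos[OF la_nonneg] .

lemma la_triangle: fixes x y :: "'a::{ordered_real_vector, lattice}"
  shows "lat_abs (x + y) \<le> lat_abs x + lat_abs y"
proof -
  have "x + y \<le> lat_abs x + lat_abs y" using la_ge by (intro add_mono)
  moreover have "- (x + y) \<le> lat_abs x + lat_abs y"
    using add_mono[OF la_ge(2)[of x] la_ge(2)[of y]] by (simp add: add.commute)
  ultimately show ?thesis unfolding lat_abs_def[of "x+y"] by simp
qed

lemma la_scale: fixes x :: "'a::{ordered_real_vector, lattice}"
  assumes "0 \<le> x" shows "lat_abs (c *\<^sub>R x) \<le> \<bar>c\<bar> *\<^sub>R x"
proof -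
  have "c *\<^sub>R x \<le> \<bar>c\<bar> *\<^sub>R x" using assms by (intro scaleR_right_mono) auto
  moreover have "- (c *\<^sub>R x) \<le> \<bar>c\<bar> *\<^sub>R x"
    using scaleR_right_mono[OF _ assms, of "-c" "\<bar>c\<bar>"] by simp
  ultimately show ?thesis unfolding lat_abs_def by simp
qed

lemma bl_norm_la:
  assumes "banach_lattice TYPE('a::{banach, ordered_real_vector, lattice})"
  shows "norm (lat_abs (x::'a)) = norm x"
  using assms unfolding banach_lattice_def by (metis la_la order_refl antisym)

lemma bl_mono:
  assumes "banach_lattice TYPE('a::{banach, ordered_real_vector, lattice})"
    and "0 \<le> (x::'a)" "x \<le> y"
  shows "norm x \<le> norm y"
proof -
  have "0 \<le> y" using assms by order
  then show ?thesis using assms unfolding banach_lattice_def using la_pos by metis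
qed

lemma pos_op_abs:
  fixes T :: "'a::{banach, ordered_real_vector, lattice} \<Rightarrow>\<^sub>L 'b::{banach, ordered_real_vector, lattice}"
  assumes "positive_op T"
  shows "lat_abs (blinfun_apply T u) \<le> blinfun_apply T (lat_abs u)"
proof -
  have 1: "0 \<le> blinfun_apply T (lat_abs u - u)" using assms la_ge[of u] unfolding positive_op_def by simp
  have "- u + u \<le> lat_abs u + u" using la_ge(2)[of u] by (rule add_right_mono)
  then have 2: "0 \<le> blinfun_apply T (lat_abs u + u)" using assms unfolding positive_op_def
    by simp
  from 1 have a: "blinfun_apply T u \<le> blinfun_apply T (lat_abs u)" by (simp add: blinfun.diff_right)
  from 2 have "0 \<le> blinfun_apply T (lat_abs u) + blinfun_apply T u" by (simp add: blinfun.add_right)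
  then have "0 - blinfun_apply T u \<le> (blinfun_apply T (lat_abs u) + blinfun_apply T u) - blinfun_apply T u"
    by (rule diff_right_mono)
  then have b: "- blinfun_apply T u \<le> blinfun_apply T (lat_abs u)" by simp
  from a b show ?thesis unfolding lat_abs_def[of "blinfun_apply T u"] by simp
qed

lemma sup0_scale: fixes x :: "'a::{ordered_real_vector, lattice}"
  assumes "c \<ge> 0" shows "sup (c *\<^sub>R x) 0 = c *\<^sub>R sup x 0"
proof (cases "c = 0")
  case True then show ?thesis by simp
next
  case False
  then have c: "c > 0" using assms by simp
  have A: "sup (d *\<^sub>R v) 0 \<le> d *\<^sub>R sup v 0" if "d > 0" for d and v :: 'a
    using that by (intro sup_least scaleR_left_mono scaleR_nonneg_nonneg) auto
  have "sup x 0 = sup (inverse c *\<^sub>R (c *\<^sub>R x)) 0" using c by simp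
  also have "\<dots> \<le> inverse c *\<^sub>R sup (c *\<^sub>R x) 0" by (rule A) (use c in simp)
  finally have "c *\<^sub>R sup x 0 \<le> c *\<^sub>R (inverse c *\<^sub>R sup (c *\<^sub>R x) 0)"
    using c by (intro scaleR_left_mono) auto
  then have "c *\<^sub>R sup x 0 \<le> sup (c *\<^sub>R x) 0" using c by simp
  then show ?thesis using A[OF c] by (rule antisym[rotated])
qed

lemma pos_functional:
  assumes bl: "banach_lattice TYPE('a::{banach, ordered_real_vector, lattice})"
    and "0 \<le> (m0::'a)" "norm m0 = 1"
  shows "\<exists>F. (\<forall>x y. F (x + y) = F x + F y) \<and> (\<forall>c x. F (c *\<^sub>R x) = c * F x) \<and>
             (\<forall>x. 0 \<le> x \<longrightarrow> 0 \<le> F x) \<and> (\<forall>x. \<bar>F x\<bar> \<le> norm x) \<and> F m0 = 1"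
proof -
  define p where "p x = norm (sup x (0::'a))" for x
  have sub: "p (x + y) \<le> p x + p y" for x y
  proof -
    have "sup (x+y) 0 \<le> sup x 0 + sup y 0"
      by (intro sup_least add_mono add_nonneg_nonneg) auto
    then have "norm (sup (x+y) 0) \<le> norm (sup x 0 + sup y 0)"
      by (intro bl_mono[OF bl]) auto
    also have "\<dots> \<le> p x + p y" unfolding p_def by (rule norm_triangle_ineq)
    finally show ?thesis unfolding p_def .
  qed
  have hom: "p (c *\<^sub>R x) = c * p x" if "c \<ge> 0" for c x
    unfolding p_def using that by (simp add: sup0_scale)
  obtain F where Fadd: "\<forall>x y. F (x + y) = F x + F y" and Fsc: "\<forall>c x. F (c *\<^sub>R x) = c * F x"
    and Fp: "\<forall>x. F x \<le> p x" and Fm: "F m0 = p m0"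
    using hahn_banach_sublinear[of p, OF sub hom] by blast
  have pn: "p x \<le> norm x" for x
  proof -
    have "sup x 0 \<le> lat_abs x" using la_ge la_nonneg by (intro sup_least) auto
    then have "norm (sup x 0) \<le> norm (lat_abs x)" by (intro bl_mono[OF bl]) auto
    then show ?thesis unfolding p_def using bl_norm_la[OF bl] by simp
  qed
  have Fneg: "F (- x) = - F x" for x using Fsc[rule_format, of "-1" x] by simp
  show ?thesis
  proof (intro exI[of _ F] conjI allI impI Fadd[rule_format] Fsc[rule_format])
    fix x :: 'a assume "0 \<le> x"
    then have "sup (- x) 0 = 0" by (simp add: sup_absorb2)
    then have "F (- x) \<le> 0" using Fp[rule_format, of "-x"] unfolding p_def by simp
    then show "0 \<le> F x" using Fneg by simp
  next
    fix x :: 'a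
    show "\<bar>F x\<bar> \<le> norm x" using Fp pn Fneg[of x] by (smt (verit) norm_minus_cancel)
  next
    show "F m0 = 1" using Fm assms unfolding p_def by (simp add: sup_absorb1)
  qed
qed

lemma unit_pos:
  assumes bl: "banach_lattice TYPE('a::{banach, ordered_real_vector, lattice})"
    and M: "banach_sublattice M" and "M \<noteq> {0::'a}"
  shows "\<exists>m0\<in>M. 0 \<le> m0 \<and> norm m0 = 1"
proof -
  have sM: "subspace M" using M unfolding banach_sublattice_def by blast
  then have "0 \<in> M" by (rule subspace_0)
  then obtain m where m: "m \<in> M" "m \<noteq> 0" using assms by blast
  have "- m \<in> M" using sM m by (simp add: subspace_neg)
  then have am: "lat_abs m \<in> M" using M m unfolding banach_sublattice_def lat_abs_def by blast
  have nm: "norm (lat_abs m) = norm m" by (rule bl_norm_la[OF bl])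
  define m0 where "m0 = inverse (norm m) *\<^sub>R lat_abs m"
  have "m0 \<in> M" unfolding m0_def using sM am by (simp add: subspace_scale)
  moreover have "0 \<le> m0" unfolding m0_def using la_nonneg by (intro scaleR_nonneg_nonneg) auto
  moreover have "norm m0 = 1" unfolding m0_def using nm m by simp
  ultimately show ?thesis by blast
qed

lemma projections:
  assumes "linf_direct_sum M N" "subspace M" "subspace N"
  shows "\<exists>P Q. (\<forall>x. P x \<in> M \<and> Q x \<in> N \<and> x = P x + Q x) \<and>
     (\<forall>m n. m \<in> M \<longrightarrow> n \<in> N \<longrightarrow> P (m + n) = m \<and> Q (m + n) = n)"
proof -
  have ex1: "\<forall>x. \<exists>!p. fst p \<in> M \<and> snd p \<in> N \<and> x = fst p + snd p"
    using assms unfolding linf_direct_sum_def by blast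
  define D where "D x = (THE p. fst p \<in> M \<and> snd p \<in> N \<and> x = fst p + snd p)" for x
  have D: "fst (D x) \<in> M \<and> snd (D x) \<in> N \<and> x = fst (D x) + snd (D x)" for x
    unfolding D_def using theI'[OF ex1[rule_format, of x]] .
  have Du: "D (m + n) = (m, n)" if "m \<in> M" "n \<in> N" for m n
    unfolding D_def using ex1[rule_format, of "m+n"] that by (intro the1_equality) auto
  show ?thesis
    by (intro exI[of _ "\<lambda>x. fst (D x)"] exI[of _ "\<lambda>x. snd (D x)"]) (simp add: D Du)
qed



theorem proposition4p3:
  fixes M N :: "'a::{banach, ordered_real_vector, lattice} set"
  assumes "banach_lattice TYPE('a)"
    and "banach_sublattice M" and "banach_sublattice N"
    and "M \<noteq> {0}" and "N \<noteq> {0}"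
    and "linf_direct_sum M N"
    and "positive_projections M N"
    and "banach_lattice TYPE('b::{banach, ordered_real_vector, lattice})"
    and "strictly_monotone TYPE('b)"
    and "BPBp_pos TYPE('a) TYPE('b)"
  shows "uniformly_monotone TYPE('b)"
proof (rule ccontr)
  note blA = assms(1) and blB = assms(8)
  have sM: "subspace M" and sN: "subspace N"
    using assms(2,3) unfolding banach_sublattice_def by blast+
  have latN: "\<And>x y. x \<in> N \<Longrightarrow> y \<in> N \<Longrightarrow> sup x y \<in> N"
    and latM: "\<And>x y. x \<in> M \<Longrightarrow> y \<in> M \<Longrightarrow> sup x y \<in> M"
    using assms(2,3) unfolding banach_sublattice_def by blast+
  have nsum: "\<And>m n. m \<in> M \<Longrightarrow> n \<in> N \<Longrightarrow> norm (m + n) = max (norm m) (norm n)"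
    using assms(6) unfolding linf_direct_sum_def by blast
  have pp: "\<And>m n. m \<in> M \<Longrightarrow> n \<in> N \<Longrightarrow> 0 \<le> m + n \<Longrightarrow> 0 \<le> m \<and> 0 \<le> n"
    using assms(7) unfolding positive_projections_def by blast
  have smB: "\<And>x y::'b. 0 \<le> x \<Longrightarrow> 0 \<le> y \<Longrightarrow> y \<noteq> 0 \<Longrightarrow> norm (x + y) > norm x"
    using assms(9) unfolding strictly_monotone_def by blast
  assume "\<not> uniformly_monotone TYPE('b)"
  then obtain e0 :: real where e0: "e0 > 0" and bad: "\<And>d. d > 0 \<Longrightarrow> \<exists>x y::'b. norm x = 1 \<and> 0 \<le> x \<and> 0 \<le> y \<and>
      norm (x + y) \<le> 1 + d \<and> norm y > e0"
    unfolding uniformly_monotone_def by (auto simp: not_le)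
  define e where "e = min (1/2) (e0/4)"
  have e: "0 < e" "e < 1" "e \<le> 1/2" "e \<le> e0/4" using e0 unfolding e_def by auto
  obtain eta where eta: "0 < eta" "eta < e" and bp: "\<And>(S::'a \<Rightarrow>\<^sub>L 'b) x0. positive_op S \<Longrightarrow> norm S = 1 \<Longrightarrow> norm x0 = 1 \<Longrightarrow>
          norm (blinfun_apply S x0) > 1 - eta \<Longrightarrow>
        (\<exists>u0 (T::'a \<Rightarrow>\<^sub>L 'b). norm u0 = 1 \<and> positive_op T \<and> norm T = 1 \<and>
           norm (blinfun_apply T u0) = 1 \<and> norm (u0 - x0) < e \<and> norm (T - S) < e)"
  proof -
    from assms(10) e(1,2) obtain eta where "0 < eta" "eta < e" and
      H: "\<forall>(S::'a \<Rightarrow>\<^sub>L 'b) x0. positive_op S \<and> norm S = 1 \<and> norm x0 = 1 \<and>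
          norm (blinfun_apply S x0) > 1 - eta \<longrightarrow>
        (\<exists>u0 (T::'a \<Rightarrow>\<^sub>L 'b). norm u0 = 1 \<and> positive_op T \<and> norm T = 1 \<and>
           norm (blinfun_apply T u0) = 1 \<and> norm (u0 - x0) < e \<and> norm (T - S) < e)"
      unfolding BPBp_pos_def by blast
    show ?thesis using that[OF \<open>0 < eta\<close> \<open>eta < e\<close>] H by blast
  qed
  obtain x y :: 'b where xy: "norm x = 1" "0 \<le> x" "0 \<le> y" "norm (x + y) \<le> 1 + eta" "norm y > e0"
    using bad[OF eta(1)] by blast
  define s where "s = norm (x + y)"
  have s1: "1 \<le> s" unfolding s_def using bl_mono[OF blB xy(2), of "x+y"] xy by simp
  have s2: "s \<le> 1 + eta" using xy s_def by simp
  obtain m0 where m0: "m0 \<in> M" "0 \<le> m0" "norm m0 = 1" using unit_pos[OF blA assms(2,4)] by blast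
  obtain n0 where n0: "n0 \<in> N" "0 \<le> n0" "norm n0 = 1" using unit_pos[OF blA assms(3,5)] by blast
  obtain F where Fadd: "\<And>x y. F (x + y) = F x + F y" and Fsc: "\<And>c x. F (c *\<^sub>R x) = c * F x"
    and Fpos: "\<And>x. 0 \<le> x \<Longrightarrow> 0 \<le> F x" and Fb: "\<And>x. \<bar>F x\<bar> \<le> norm x" and Fm: "F m0 = 1"
    using pos_functional[OF blA m0(2,3)] by blast
  obtain G where Gadd: "\<And>x y. G (x + y) = G x + G y" and Gsc: "\<And>c x. G (c *\<^sub>R x) = c * G x"
    and Gpos: "\<And>x. 0 \<le> x \<Longrightarrow> 0 \<le> G x" and Gb: "\<And>x. \<bar>G x\<bar> \<le> norm x" and Gn: "G n0 = 1"
    using pos_functional[OF blA n0(2,3)] by blast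
  obtain P Q where PQ: "\<And>v. P v \<in> M" "\<And>v. Q v \<in> N" "\<And>v. v = P v + Q v"
    and PQu: "\<And>m n. m \<in> M \<Longrightarrow> n \<in> N \<Longrightarrow> P (m + n) = m \<and> Q (m + n) = n"
    using projections[OF assms(6) sM sN] by metis
  have Padd: "P (u + v) = P u + P v" and Qadd: "Q (u + v) = Q u + Q v" for u v
  proof -
    have "u + v = (P u + P v) + (Q u + Q v)" using PQ(3)[of u] PQ(3)[of v] by (simp add: algebra_simps)
    moreover have "P u + P v \<in> M" "Q u + Q v \<in> N" using PQ sM sN by (simp_all add: subspace_add)
    ultimately show "P (u + v) = P u + P v" "Q (u + v) = Q u + Q v" using PQu by metis+
  qed
  have Psc: "P (c *\<^sub>R u) = c *\<^sub>R P u" and Qsc: "Q (c *\<^sub>R u) = c *\<^sub>R Q u" for c u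
  proof -
    have "c *\<^sub>R u = c *\<^sub>R P u + c *\<^sub>R Q u" using PQ(3)[of u] by (metis scaleR_add_right)
    moreover have "c *\<^sub>R P u \<in> M" "c *\<^sub>R Q u \<in> N" using PQ sM sN by (simp_all add: subspace_scale)
    ultimately show "P (c *\<^sub>R u) = c *\<^sub>R P u" "Q (c *\<^sub>R u) = c *\<^sub>R Q u" using PQu by metis+
  qed
  have nPQ: "norm v = max (norm (P v)) (norm (Q v))" for v using nsum[OF PQ(1,2)] PQ(3)[of v] by metis
  have F0: "F 0 = 0" using Fsc[of 0 0] by simp
  have G0: "G 0 = 0" using Gsc[of 0 0] by simp
  have Pm0: "P m0 = m0" "Q m0 = 0" using PQu[OF m0(1) subspace_0[OF sN]] by simp_all
  have Pn0: "P n0 = 0" "Q n0 = n0" using PQu[OF subspace_0[OF sM] n0(1)] by simp_all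
  define Sf where "Sf v = inverse s *\<^sub>R (F (P v) *\<^sub>R x + G (Q v) *\<^sub>R y)" for v
  have Sf_bound: "norm (Sf v) \<le> norm v * 1" for v
  proof -
    have "lat_abs (F (P v) *\<^sub>R x + G (Q v) *\<^sub>R y) \<le> lat_abs (F (P v) *\<^sub>R x) + lat_abs (G (Q v) *\<^sub>R y)"
      by (rule la_triangle)
    also have "\<dots> \<le> \<bar>F (P v)\<bar> *\<^sub>R x + \<bar>G (Q v)\<bar> *\<^sub>R y"
      by (intro add_mono la_scale xy)
    also have "\<dots> \<le> norm v *\<^sub>R x + norm v *\<^sub>R y"
      using Fb[of "P v"] Gb[of "Q v"] nPQ[of v] xy(2,3)
      by (intro add_mono scaleR_right_mono) auto
    also have "\<dots> = lat_abs (norm v *\<^sub>R (x + y))"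
    proof -
      have "0 \<le> norm v *\<^sub>R (x + y)" using xy(2,3) by (intro scaleR_nonneg_nonneg add_nonneg_nonneg) auto
      then show ?thesis using la_pos by (metis scaleR_add_right)
    qed
    finally have "norm (F (P v) *\<^sub>R x + G (Q v) *\<^sub>R y) \<le> norm (norm v *\<^sub>R (x + y))"
      using blB unfolding banach_lattice_def by blast
    then have "norm (F (P v) *\<^sub>R x + G (Q v) *\<^sub>R y) \<le> norm v * s" unfolding s_def by simp
    then have i1: "inverse s * norm (F (P v) *\<^sub>R x + G (Q v) *\<^sub>R y) \<le> inverse s * (norm v * s)"
      using s1 by (intro mult_left_mono) auto
    have eq1: "norm (Sf v) = inverse s * norm (F (P v) *\<^sub>R x + G (Q v) *\<^sub>R y)"
      unfolding Sf_def using s1 by simp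
    have eq2: "inverse s * (norm v * s) = norm v" using s1 by simp
    show ?thesis using i1 eq1 eq2 by linarith
  qed
  have bl: "bounded_linear Sf"
  proof (rule bounded_linear_intro[OF _ _ Sf_bound])
    fix u v show "Sf (u + v) = Sf u + Sf v"
      unfolding Sf_def by (simp add: Padd Qadd Fadd Gadd algebra_simps)
  next
    fix r u show "Sf (r *\<^sub>R u) = r *\<^sub>R Sf u"
      unfolding Sf_def by (simp add: Psc Qsc Fsc Gsc algebra_simps)
  qed
  define S where "S = Blinfun Sf"
  have Sap: "blinfun_apply S = Sf" unfolding S_def using bl by (rule bounded_linear_Blinfun_apply)
  have Spos: "positive_op S" unfolding positive_op_def Sap
  proof (intro allI impI)
    fix v :: 'a assume "0 \<le> v"
    then have "0 \<le> P v \<and> 0 \<le> Q v" using pp[OF PQ(1,2)] PQ(3)[of v] by metis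
    then show "0 \<le> Sf v" unfolding Sf_def using xy(2,3) s1 Fpos Gpos
      by (intro scaleR_nonneg_nonneg add_nonneg_nonneg) auto
  qed
  have nS: "norm S = 1"
  proof (rule antisym)
    show "norm S \<le> 1" using Sf_bound by (intro norm_blinfun_bound) (auto simp: Sap)
    have "Sf (m0 + n0) = inverse s *\<^sub>R (x + y)"
      unfolding Sf_def using PQu[OF m0(1) n0(1)] Fm Gn by simp
    moreover have "norm (inverse s *\<^sub>R (x + y)) = inverse s * s" using s1 unfolding s_def by simp
    ultimately have "norm (Sf (m0 + n0)) = 1" using s1 by simp
    moreover have "norm (m0 + n0) = 1" using nsum[OF m0(1) n0(1)] m0 n0 by simp
    ultimately show "1 \<le> norm S" using norm_blinfun[of S "m0 + n0"] Sap by simp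
  qed
  have Sm0: "blinfun_apply S m0 = inverse s *\<^sub>R x" unfolding Sap Sf_def using Pm0 Fm G0 by simp
  have Sn0: "blinfun_apply S n0 = inverse s *\<^sub>R y" unfolding Sap Sf_def using Pn0 Gn F0 by simp
  have "norm (blinfun_apply S m0) > 1 - eta"
  proof -
    have "norm (blinfun_apply S m0) = inverse s" using Sm0 xy(1) s1 by simp
    moreover have "inverse (1 + eta) \<le> inverse s" using s1 s2 by (intro le_imp_inverse_le) auto
    moreover have "1 - eta < inverse (1 + eta)"
      using eta by (simp add: field_simps)
    ultimately show ?thesis by linarith
  qed
  then obtain u0 and T :: "'a \<Rightarrow>\<^sub>L 'b" where T: "norm u0 = 1" "positive_op T" "norm T = 1"
    "norm (blinfun_apply T u0) = 1" "norm (u0 - m0) < e" "norm (T - S) < e"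
    using bp[OF Spos nS m0(3)] by blast
  have Tpos: "\<And>v. 0 \<le> v \<Longrightarrow> 0 \<le> blinfun_apply T v" using T(2) unfolding positive_op_def by blast
  define w where "w = lat_abs u0"
  have w0: "0 \<le> w" unfolding w_def by (rule la_nonneg)
  have nw: "norm w = 1" unfolding w_def using bl_norm_la[OF blA] T(1) by simp
  have "1 \<le> norm (blinfun_apply T w)"
  proof -
    have "lat_abs (blinfun_apply T u0) \<le> lat_abs (blinfun_apply T w)"
      using pos_op_abs[OF T(2), of u0] la_pos[OF Tpos[OF w0]] unfolding w_def by simp
    then show ?thesis using blB T(4) unfolding banach_lattice_def by metis
  qed
  moreover have "norm (blinfun_apply T w) \<le> 1" using norm_blinfun[of T w] T(3) nw by simp
  ultimately have nTw: "norm (blinfun_apply T w) = 1" by simp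
  define a b where "a = P w" and "b = Q w"
  have ab: "a \<in> M" "b \<in> N" "w = a + b" unfolding a_def b_def using PQ by auto
  have ab0: "0 \<le> a" "0 \<le> b" using pp[OF ab(1,2)] ab(3) w0 by auto
  have na: "norm a \<le> 1" using nPQ[of w] nw a_def by simp
  define a' b' where "a' = P u0" and "b' = Q u0"
  have ab': "a' \<in> M" "b' \<in> N" "u0 = a' + b'" unfolding a'_def b'_def using PQ by auto
  have laM: "lat_abs a' \<in> M" using latM[OF ab'(1)] sM ab'(1) unfolding lat_abs_def by (simp add: subspace_neg)
  have laN: "lat_abs b' \<in> N" using latN[OF ab'(2)] sN ab'(2) unfolding lat_abs_def by (simp add: subspace_neg)
  have "w \<le> lat_abs a' + lat_abs b'" unfolding w_def ab'(3) by (rule la_triangle)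
  then have "0 \<le> (lat_abs a' - a) + (lat_abs b' - b)" using ab(3) by (simp add: algebra_simps)
  moreover have "lat_abs a' - a \<in> M" "lat_abs b' - b \<in> N" using laM laN ab sM sN by (simp_all add: subspace_diff)
  ultimately have "0 \<le> lat_abs b' - b" using pp by blast
  then have "norm b \<le> norm (lat_abs b')" using bl_mono[OF blA ab0(2)] by simp
  then have nb1: "norm b \<le> norm b'" using bl_norm_la[OF blA] by simp
  have eqd: "u0 - m0 = (a' - m0) + b'" using ab'(3) by simp
  have "a' - m0 \<in> M" using ab'(1) m0(1) sM by (simp add: subspace_diff)
  then have "Q (u0 - m0) = b'" unfolding eqd using PQu[OF _ ab'(2)] by blast
  then have "norm b' \<le> norm (u0 - m0)" using nPQ[of "u0 - m0"] by simp
  with nb1 T(5) have nb: "norm b < e" by simp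
  define z where "z = a + (b + (1/2) *\<^sub>R n0)"
  have bn: "b + (1/2) *\<^sub>R n0 \<in> N" using ab(2) n0(1) sN by (simp add: subspace_add subspace_scale)
  have "norm (b + (1/2) *\<^sub>R n0) \<le> norm b + 1/2" using norm_triangle_ineq[of b "(1/2) *\<^sub>R n0"] n0(3) by simp
  then have "norm z \<le> 1" unfolding z_def using nsum[OF ab(1) bn] na nb e by simp
  then have nTz: "norm (blinfun_apply T z) \<le> 1" using norm_blinfun[of T z] T(3) by simp
  have Tz: "blinfun_apply T z = blinfun_apply T w + (1/2) *\<^sub>R blinfun_apply T n0"
    unfolding z_def ab(3) by (simp add: blinfun.add_right blinfun.scaleR_right algebra_simps)
  have "norm (blinfun_apply (T - S) n0) \<le> norm (T - S)" using norm_blinfun[of "T - S" n0] n0(3) by simp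
  then have d1: "norm (blinfun_apply T n0 - blinfun_apply S n0) < e" using T(6) by (simp add: blinfun.diff_left)
  have "norm (blinfun_apply S n0) = norm y / s" using Sn0 s1 by (simp add: field_simps)
  moreover have "e0 / 2 < norm y / s"
  proof -
    have "s \<le> 2" using s2 eta e by simp
    then have "e0 / 2 \<le> e0 / s" using s1 e0 by (intro divide_left_mono) auto
    also have "e0 / s < norm y / s" using xy(5) s1 by (intro divide_strict_right_mono) auto
    finally show ?thesis .
  qed
  ultimately have "norm (blinfun_apply T n0) > 0"
    using d1 e norm_triangle_ineq2[of "blinfun_apply S n0" "blinfun_apply T n0"] norm_minus_commute[of "blinfun_apply T n0" "blinfun_apply S n0"]
    by linarith
  then have Tn0: "(1/2) *\<^sub>R blinfun_apply T n0 \<noteq> 0" by simp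
  have "norm (blinfun_apply T w + (1/2) *\<^sub>R blinfun_apply T n0) > norm (blinfun_apply T w)"
    using smB[OF Tpos[OF w0] _ Tn0] Tpos[OF n0(2)] by (simp add: scaleR_nonneg_nonneg)
  then show False using nTz Tz nTw by simp
qed


end
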